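(* Let $G(\mathcal V,\mathcal E)$ be a finite simple directed graph and $f\ge 0$ an integer, such that for every partition $X,Y,Z$ of $\mathcal V$ with $X,Y$ non-empty and $|Z|\le f$, either $X \Rightarrow_{\mathcal V - Z} Y$ or $Y \Rightarrow_{\mathcal V - Z} X$. Let $A,B,C,F$ be pairwise disjoint subsets of $\mathcal V$ with $|F|\le f$ and $A,B,C$ non-empty. If $A \Rightarrow_{\mathcal V - F} B$ and $A\cup B \Rightarrow_{\mathcal V - F} C$, then $A \Rightarrow_{\mathcal V - F} B\cup C$.
   Context: An $(X,y)$-path is a directed path from some node of $X$ to the node $y\notin X$; it excludes $F$ if it contains no node of $F$; $(X,y)$-paths are disjoint if they pairwise share only $y$. For pairwise disjoint $X,Y,F\subseteq\mathcal V$ with $|F|\le f$, $X \Rightarrow_{\mathcal V - F} Y$ means: $Y=\emptyset$, or every $y\in Y$ has at least $f+1$ pairwise disjoint $(X,y)$-paths excluding $F$. *)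

theory Defs
  imports Main
begin

definition simple_digraph :: "'a set \<Rightarrow> ('a \<times> 'a) set \<Rightarrow> bool" where
  "simple_digraph V E \<longleftrightarrow> finite V \<and> E \<subseteq> V \<times> V \<and> (\<forall>v. (v, v) \<notin> E)"

definition dpath :: "'a set \<Rightarrow> ('a \<times> 'a) set \<Rightarrow> 'a list \<Rightarrow> bool" where
  "dpath V E ps \<longleftrightarrow> ps \<noteq> [] \<and> distinct ps \<and> set ps \<subseteq> V \<and>
     (\<forall>i. Suc i < length ps \<longrightarrow> (ps ! i, ps ! Suc i) \<in> E)"

definition Xy_path :: "'a set \<Rightarrow> ('a \<times> 'a) set \<Rightarrow> 'a set \<Rightarrow> 'a \<Rightarrow> 'a list \<Rightarrow> bool" where
  "Xy_path V E X y ps \<longleftrightarrow> y \<notin> X \<and> dpath V E ps \<and> hd ps \<in> X \<and> last ps = y"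

definition reaches :: "'a set \<Rightarrow> ('a \<times> 'a) set \<Rightarrow> nat \<Rightarrow> 'a set \<Rightarrow> 'a set \<Rightarrow> 'a set \<Rightarrow> bool" where
  "reaches V E f F X Y \<longleftrightarrow> Y = {} \<or>
     (\<forall>y\<in>Y. \<exists>P. finite P \<and> f + 1 \<le> card P \<and>
        (\<forall>ps\<in>P. Xy_path V E X y ps \<and> set ps \<inter> F = {}) \<and>
        (\<forall>p\<in>P. \<forall>q\<in>P. p \<noteq> q \<longrightarrow> set p \<inter> set q = {y}))"

end

theory Submission
  imports Defs
begin


definition wlk :: "('a \<times> 'a) set \<Rightarrow> 'a list \<Rightarrow> bool" where
  "wlk E p \<longleftrightarrow> p \<noteq> [] \<and> successively (\<lambda>a b. (a,b) \<in> E) p"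

definition ABp :: "('a \<times> 'a) set \<Rightarrow> 'a set \<Rightarrow> 'a set \<Rightarrow> 'a list \<Rightarrow> bool" where
  "ABp E A B p \<longleftrightarrow> wlk E p \<and> distinct p \<and> hd p \<in> A \<and> last p \<in> B"

definition sep :: "('a \<times> 'a) set \<Rightarrow> 'a set \<Rightarrow> 'a set \<Rightarrow> 'a set \<Rightarrow> bool" where
  "sep E A B S \<longleftrightarrow> (\<forall>p. ABp E A B p \<longrightarrow> set p \<inter> S \<noteq> {})"

definition proper :: "'a set \<Rightarrow> 'a set \<Rightarrow> 'a list \<Rightarrow> bool" where
  "proper A B p \<longleftrightarrow> (\<forall>v\<in>set p. v \<in> A \<longrightarrow> v = hd p) \<and> (\<forall>v\<in>set p. v \<in> B \<longrightarrow> v = last p)"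

lemma wlk_to_path:
  assumes "wlk E p"
  shows "\<exists>q. wlk E q \<and> distinct q \<and> hd q = hd p \<and> last q = last p \<and> set q \<subseteq> set p"
  using assms
proof (induction p)
  case Nil then show ?case by (simp add: wlk_def)
next
  case (Cons x p)
  show ?case
  proof (cases "p = []")
    case True then show ?thesis using Cons by auto
  next
    case False
    then have wp: "wlk E p" and ex: "(x, hd p) \<in> E" using Cons.prems by (auto simp: wlk_def successively_Cons)
    obtain q where q: "wlk E q" "distinct q" "hd q = hd p" "last q = last p" "set q \<subseteq> set p"
      using Cons.IH[OF wp] by blast
    show ?thesis
    proof (cases "x \<in> set q")
      case True
      then obtain u w where uw: "q = u @ x # w" by (meson split_list)
      have "successively (\<lambda>a b. (a,b) \<in> E) (x # w)"
        using q(1) uw by (auto simp: wlk_def successively_append_iff)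
      moreover have "distinct (x # w)" using q(2) uw by auto
      moreover have "last (x # w) = last (x # p)" using q(4) uw False by auto
      moreover have "set (x # w) \<subseteq> set (x # p)" using q(5) uw by auto
      ultimately show ?thesis by (intro exI[of _ "x # w"]) (auto simp: wlk_def)
    next
      case False
      have "q \<noteq> []" using q(1) by (simp add: wlk_def)
      then have "successively (\<lambda>a b. (a,b) \<in> E) (x # q)"
        using q(1) q(3) ex by (auto simp: wlk_def successively_Cons)
      then show ?thesis using False q \<open>p \<noteq> []\<close> \<open>q \<noteq> []\<close>
        by (intro exI[of _ "x # q"]) (auto simp: wlk_def)
    qed
  qed
qed

lemma wlk_mono: "wlk E p \<Longrightarrow> E \<subseteq> E' \<Longrightarrow> wlk E' p"
  unfolding wlk_def by (auto elim: successively_mono)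

lemma wlk_remove_edge:
  assumes "wlk E p" "\<not> wlk (E - {(x,y)}) p"
  shows "\<exists>u w. p = u @ x # y # w"
  using assms
proof (induction p)
  case Nil then show ?case by (simp add: wlk_def)
next
  case (Cons a p)
  show ?case
  proof (cases p)
    case Nil then show ?thesis using Cons.prems by (simp add: wlk_def)
  next
    case (Cons b p')
    show ?thesis
    proof (cases "(a, b) = (x, y)")
      case True then show ?thesis using Cons by auto
    next
      case False
      have wp: "wlk E p" using Cons.prems \<open>p = b # p'\<close> by (auto simp: wlk_def)
      have "\<not> wlk (E - {(x,y)}) p" using Cons.prems \<open>p = b # p'\<close> False by (auto simp: wlk_def)
      then obtain u1 w1 where "p = u1 @ x # y # w1" using Cons.IH wp by blast
      then have "a # p = (a # u1) @ x # y # w1" by simp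
      then show ?thesis by blast
    qed
  qed
qed

lemma succ_join:
  assumes "successively R (xs @ [v])" "successively R (v # ys)"
  shows "successively R (xs @ v # ys)"
  using assms by (cases ys) (auto simp: successively_append_iff successively_Cons)

lemma trim_path:
  assumes "ABp E A B p"
  shows "\<exists>q. ABp E A B q \<and> proper A B q \<and> set q \<subseteq> set p"
proof -
  have "p \<noteq> []" "hd p \<in> A" "last p \<in> B" using assms by (auto simp: ABp_def wlk_def)
  then have "\<exists>v\<in>set p. v \<in> A" using hd_in_set by blast
  then obtain u a w where p: "p = u @ a # w" "a \<in> A" "\<forall>z\<in>set w. z \<notin> A"
    using split_list_last_prop[of p "\<lambda>v. v \<in> A"] by blast
  have "last (a # w) = last p" using p by simp
  then have "\<exists>v\<in>set (a # w). v \<in> B" using \<open>last p \<in> B\<close> by (metis last_in_set list.distinct(1))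
  then obtain u' b w' where aw: "a # w = u' @ b # w'" "b \<in> B" "\<forall>z\<in>set u'. z \<notin> B"
    using split_list_first_prop[of "a # w" "\<lambda>v. v \<in> B"] by blast
  define q where "q = u' @ [b]"
  have s: "successively (\<lambda>a b. (a,b) \<in> E) (a # w)"
    using assms p by (auto simp: ABp_def wlk_def successively_append_iff)
  then have s2: "successively (\<lambda>a b. (a,b) \<in> E) (u' @ b # w')" using aw(1) by simp
  have "u' @ b # w' = q @ w'" unfolding q_def by simp
  then have sq: "successively (\<lambda>a b. (a,b) \<in> E) q" using s2 by (metis successively_append_iff)
  have "distinct (a # w)" using assms p by (simp add: ABp_def)
  then have "distinct (u' @ b # w')" using aw(1) by simp
  then have dq: "distinct q" unfolding q_def by auto
  have hq: "hd q = a" using aw unfolding q_def by (cases u') auto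
  have sub: "set q \<subseteq> set (a # w)" using aw unfolding q_def by auto
  have lq: "last q = b" unfolding q_def by simp
  have pB: "\<forall>v\<in>set q. v \<in> B \<longrightarrow> v = last q" using aw unfolding q_def by auto
  have pA: "\<forall>v\<in>set q. v \<in> A \<longrightarrow> v = hd q" using sub p(3) hq by auto
  have "ABp E A B q" unfolding ABp_def wlk_def using sq dq hq lq p(2) aw(2) by (simp add: q_def)
  moreover have "set q \<subseteq> set p" using sub p(1) by auto
  ultimately show ?thesis using pA pB unfolding proper_def by blast
qed




lemma ABp_ne: "ABp E A B p \<Longrightarrow> p \<noteq> []"
  by (simp add: ABp_def wlk_def)

lemma ABp_mono: "ABp E' A B p \<Longrightarrow> E' \<subseteq> E \<Longrightarrow> ABp E A B p"
  unfolding ABp_def using wlk_mono by blast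

lemma trim_family:
  assumes "\<forall>p\<in>Q. ABp E A B p" "\<forall>p\<in>Q. \<forall>q\<in>Q. p \<noteq> q \<longrightarrow> set p \<inter> set q = {}" "card Q = k"
  shows "\<exists>P. card P = k \<and> (\<forall>p\<in>P. ABp E A B p \<and> proper A B p) \<and>
     (\<forall>p\<in>P. \<forall>q\<in>P. p \<noteq> q \<longrightarrow> set p \<inter> set q = {})"
proof -
  have "\<forall>p\<in>Q. \<exists>q. ABp E A B q \<and> proper A B q \<and> set q \<subseteq> set p"
    using assms(1) trim_path by blast
  then obtain t where t: "\<forall>p\<in>Q. ABp E A B (t p) \<and> proper A B (t p) \<and> set (t p) \<subseteq> set p"
    by metis
  have inj: "inj_on t Q"
  proof (rule inj_onI)
    fix p q assume pq: "p \<in> Q" "q \<in> Q" "t p = t q"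
    show "p = q"
    proof (rule ccontr)
      assume "p \<noteq> q"
      then have "set p \<inter> set q = {}" using assms(2) pq by blast
      moreover have "set (t p) \<subseteq> set p" "set (t q) \<subseteq> set q" using t pq by blast+
      ultimately have "set (t p) \<subseteq> {}" using pq(3) by (metis Int_greatest)
      moreover have "t p \<noteq> []" using t pq ABp_ne by blast
      ultimately show False by simp
    qed
  qed
  have "card (t ` Q) = k" using card_image[OF inj] assms(3) by simp
  moreover have "\<forall>p\<in>t ` Q. ABp E A B p \<and> proper A B p" using t by blast
  moreover have "\<forall>p\<in>t ` Q. \<forall>q\<in>t ` Q. p \<noteq> q \<longrightarrow> set p \<inter> set q = {}"
  proof (intro ballI impI)
    fix p' q' assume "p' \<in> t ` Q" "q' \<in> t ` Q" "p' \<noteq> q'"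
    then obtain p q where "p \<in> Q" "q \<in> Q" "p' = t p" "q' = t q" "p \<noteq> q" by blast
    then show "set p' \<inter> set q' = {}" using assms(2) t by blast
  qed
  ultimately show ?thesis by blast
qed

lemma sep_insert:
  assumes "sep (E - {(x,y)}) A B S"
  shows "sep E A B (insert x S)" "sep E A B (insert y S)"
proof -
  { fix p assume p: "ABp E A B p"
    have "set p \<inter> S \<noteq> {} \<or> (x \<in> set p \<and> y \<in> set p)"
    proof (cases "wlk (E - {(x,y)}) p")
      case True
      then have "ABp (E - {(x,y)}) A B p" using p by (simp add: ABp_def)
      then show ?thesis using assms by (simp add: sep_def)
    next
      case False
      then obtain u w where "p = u @ x # y # w" using wlk_remove_edge p by (metis ABp_def)
      then show ?thesis by simp
    qed }
  then show "sep E A B (insert x S)" "sep E A B (insert y S)" unfolding sep_def by blast+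
qed

lemma sep_prefix:
  assumes "sep E A B X" "x \<in> X" "sep (E - {(x,y)}) A X T"
  shows "sep E A B T"
  unfolding sep_def
proof (intro allI impI)
  fix p assume p: "ABp E A B p"
  then have "set p \<inter> X \<noteq> {}" using assms(1) by (simp add: sep_def)
  then have "\<exists>v\<in>set p. v \<in> X" by blast
  then obtain u v w where uvw: "p = u @ v # w" "v \<in> X" "\<forall>z\<in>set u. z \<notin> X"
    using split_list_first_prop[of p "\<lambda>v. v \<in> X"] by blast
  define q where "q = u @ [v]"
  have pq: "p = q @ w" unfolding q_def using uvw by simp
  have sq: "successively (\<lambda>a b. (a,b) \<in> E) q" using p pq
    by (simp add: ABp_def wlk_def successively_append_iff)
  have wq: "wlk E q" using sq by (simp add: wlk_def q_def)
  have dq: "distinct q" using p pq by (simp add: ABp_def)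
  have hq: "hd q = hd p" using uvw(1) by (cases u) (simp_all add: q_def)
  have lq: "last q = v" by (simp add: q_def)
  have "wlk (E - {(x,y)}) q"
  proof (rule ccontr)
    assume "\<not> wlk (E - {(x,y)}) q"
    then obtain u1 w1 where e: "q = u1 @ x # y # w1" using wlk_remove_edge[OF wq] by blast
    have "x \<in> set (butlast (u1 @ x # y # w1))" by (simp add: butlast_append)
    moreover have "u = butlast q" by (simp add: q_def)
    ultimately have "x \<in> set u" using e by simp
    then show False using uvw assms(2) by blast
  qed
  then have "ABp (E - {(x,y)}) A X q" using dq hq lq p uvw by (simp add: ABp_def)
  then have "set q \<inter> T \<noteq> {}" using assms(3) by (simp add: sep_def)
  then show "set p \<inter> T \<noteq> {}" using pq by auto
qed

lemma sep_suffix: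
  assumes "sep E A B X" "y \<in> X" "sep (E - {(x,y)}) X B T"
  shows "sep E A B T"
  unfolding sep_def
proof (intro allI impI)
  fix p assume p: "ABp E A B p"
  then have "set p \<inter> X \<noteq> {}" using assms(1) by (simp add: sep_def)
  then have "\<exists>v\<in>set p. v \<in> X" by blast
  then obtain u v w where uvw: "p = u @ v # w" "v \<in> X" "\<forall>z\<in>set w. z \<notin> X"
    using split_list_last_prop[of p "\<lambda>v. v \<in> X"] by blast
  define q where "q = v # w"
  have pq: "p = u @ q" unfolding q_def using uvw by simp
  have sq: "successively (\<lambda>a b. (a,b) \<in> E) q" using p pq
    by (simp add: ABp_def wlk_def successively_append_iff)
  have wq: "wlk E q" using sq by (simp add: wlk_def q_def)
  have dq: "distinct q" using p pq by (simp add: ABp_def)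
  have hq: "hd q = v" by (simp add: q_def)
  have lq: "last q = last p" using pq by (simp add: q_def)
  have "wlk (E - {(x,y)}) q"
  proof (rule ccontr)
    assume "\<not> wlk (E - {(x,y)}) q"
    then obtain u1 w1 where e: "q = u1 @ x # y # w1" using wlk_remove_edge[OF wq] by blast
    have "y \<in> set (tl (u1 @ x # y # w1))" by (cases u1) auto
    moreover have "w = tl q" by (simp add: q_def)
    ultimately have "y \<in> set w" using e by simp
    then show False using uvw assms(2) by blast
  qed
  then have "ABp (E - {(x,y)}) X B q" using dq hq lq p uvw by (simp add: ABp_def)
  then have "set q \<inter> T \<noteq> {}" using assms(3) by (simp add: sep_def)
  then show "set p \<inter> T \<noteq> {}" using pq by auto
qed

lemma cross:
  assumes "sep E A B S" "ABp E A X1 p1" "proper A X1 p1" "ABp E X2 B p2" "proper X2 B p2"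
    "S \<subseteq> X1" "S \<subseteq> X2" "v \<in> set p1" "v \<in> set p2"
  shows "v \<in> S"
proof (rule ccontr)
  assume vS: "v \<notin> S"
  obtain u1 w1 where p1: "p1 = u1 @ v # w1" using assms(8) by (meson split_list)
  obtain u2 w2 where p2: "p2 = u2 @ v # w2" using assms(9) by (meson split_list)
  define W where "W = u1 @ v # w2"
  have s1: "successively (\<lambda>a b. (a,b) \<in> E) ((u1 @ [v]) @ w1)" using assms(2) p1
    by (simp add: ABp_def wlk_def)
  have s2: "successively (\<lambda>a b. (a,b) \<in> E) (u2 @ (v # w2))" using assms(4) p2
    by (simp add: ABp_def wlk_def)
  have "successively (\<lambda>a b. (a,b) \<in> E) W" unfolding W_def
    using succ_join s1 s2 by (metis successively_append_iff)
  then have wW: "wlk E W" by (simp add: wlk_def W_def)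
  have hW: "hd W = hd p1" unfolding W_def p1 by (cases u1) auto
  have lW: "last W = last p2" unfolding W_def p2 by simp
  have d1: "distinct p1" and d2: "distinct p2" using assms(2,4) by (auto simp: ABp_def)
  have "set u1 \<inter> S = {}"
  proof -
    { fix z assume z: "z \<in> set u1" "z \<in> S"
      have "z \<in> set p1" using p1 z(1) by simp
      then have "z = last p1" using assms(3,6) z(2) unfolding proper_def by blast
      then have "z \<in> set (v # w1)" using p1 by simp
      moreover have "set u1 \<inter> set (v # w1) = {}" using d1 p1 by simp
      ultimately have False using z(1) by blast }
    then show ?thesis by blast
  qed
  moreover have "set w2 \<inter> S = {}"
  proof -
    { fix z assume z: "z \<in> set w2" "z \<in> S"
      have "z \<in> set p2" using p2 z(1) by simp
      then have "z = hd p2" using assms(5,7) z(2) unfolding proper_def by blast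
      then have "z \<in> set (u2 @ [v])" using p2 by (cases u2) auto
      moreover have "set (u2 @ [v]) \<inter> set w2 = {}" using d2 p2 by simp
      ultimately have False using z(1) by blast }
    then show ?thesis by blast
  qed
  ultimately have WS: "set W \<inter> S = {}" using vS by (auto simp: W_def)
  obtain q where q: "wlk E q" "distinct q" "hd q = hd W" "last q = last W" "set q \<subseteq> set W"
    using wlk_to_path[OF wW] by blast
  have "ABp E A B q" using q hW lW assms(2,4) by (simp add: ABp_def)
  then have "set q \<inter> S \<noteq> {}" using assms(1) by (simp add: sep_def)
  then show False using q(5) WS by blast
qed

lemma join1:
  assumes "ABp E A X p1" "ABp E X' B p2" "last p1 = hd p2" "set p1 \<inter> set (tl p2) = {}"
  shows "ABp E A B (p1 @ tl p2)"
proof -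
  have ne1: "p1 \<noteq> []" and ne2: "p2 \<noteq> []" using assms ABp_ne by blast+
  then have p2: "p2 = hd p2 # tl p2" by simp
  have s1: "successively (\<lambda>a b. (a,b) \<in> E) p1" and s2: "successively (\<lambda>a b. (a,b) \<in> E) p2"
    using assms by (auto simp: ABp_def wlk_def)
  have "successively (\<lambda>a b. (a,b) \<in> E) (hd p2 # tl p2)" using s2 p2 by simp
  then have "successively (\<lambda>a b. (a,b) \<in> E) (p1 @ tl p2)"
    using s1 assms(3) by (auto simp: successively_append_iff successively_Cons)
  moreover have "distinct (p1 @ tl p2)" using assms by (auto simp: ABp_def distinct_tl)
  moreover have "hd (p1 @ tl p2) = hd p1" using ne1 by simp
  moreover have "last (p1 @ tl p2) = last p2"
  proof (cases "tl p2 = []")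
    case True then show ?thesis using assms(3) p2 by (metis append_Nil2 last_ConsL)
  next
    case False then show ?thesis using p2 by (metis last_ConsR last_appendR)
  qed
  ultimately show ?thesis using assms ne1 by (simp add: ABp_def wlk_def)
qed

lemma join2:
  assumes "ABp E A X p1" "ABp E X' B p2" "(last p1, hd p2) \<in> E" "set p1 \<inter> set p2 = {}"
  shows "ABp E A B (p1 @ p2)"
proof -
  have ne1: "p1 \<noteq> []" and ne2: "p2 \<noteq> []" using assms ABp_ne by blast+
  have "successively (\<lambda>a b. (a,b) \<in> E) (p1 @ p2)"
    using assms by (auto simp: ABp_def wlk_def successively_append_iff)
  then show ?thesis using assms ne1 ne2 by (simp add: ABp_def wlk_def)
qed




lemma menger:
  assumes "finite E" "finite A" "\<forall>S. finite S \<longrightarrow> sep E A B S \<longrightarrow> k \<le> card S"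
  shows "\<exists>P. card P = k \<and> (\<forall>p\<in>P. ABp E A B p \<and> proper A B p) \<and>
     (\<forall>p\<in>P. \<forall>q\<in>P. p \<noteq> q \<longrightarrow> set p \<inter> set q = {})"
  using assms
proof (induction E arbitrary: A B k rule: finite_psubset_induct)
  case (psubset E)
  show ?case
  proof (cases "E = {}")
    case True
    have "sep E A B (A \<inter> B)"
      unfolding sep_def
    proof (intro allI impI)
      fix p assume p: "ABp E A B p"
      then obtain a r where pr: "p = a # r" by (cases p) (auto simp: ABp_def wlk_def)
      have "r = []"
      proof (rule ccontr)
        assume "r \<noteq> []"
        then have "(a, hd r) \<in> E" using p pr by (auto simp: ABp_def wlk_def successively_Cons)
        then show False using True by simp
      qed
      then show "set p \<inter> (A \<inter> B) \<noteq> {}" using p pr by (auto simp: ABp_def)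
    qed
    then have "k \<le> card (A \<inter> B)" using psubset.prems by simp
    then obtain T where T: "T \<subseteq> A \<inter> B" "card T = k"
      by (meson obtain_subset_with_card_n)
    define P where "P = (\<lambda>v. [v]) ` T"
    have "card P = k" unfolding P_def using T by (simp add: card_image inj_on_def)
    moreover have "\<forall>p\<in>P. ABp E A B p \<and> proper A B p"
      using T unfolding P_def by (auto simp: ABp_def wlk_def proper_def)
    moreover have "\<forall>p\<in>P. \<forall>q\<in>P. p \<noteq> q \<longrightarrow> set p \<inter> set q = {}"
      unfolding P_def by auto
    ultimately show ?thesis by blast
  next
    case False
    then obtain x y where e: "(x,y) \<in> E" by auto
    define E' where "E' = E - {(x,y)}"
    have E'E: "E' \<subset> E" unfolding E'_def using e by auto
    have fE': "finite E'" using psubset.hyps E'E by (simp add: E'_def)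
    show ?thesis
    proof (cases "\<forall>S. finite S \<longrightarrow> sep E' A B S \<longrightarrow> k \<le> card S")
      case True
      obtain P where P: "card P = k" "\<forall>p\<in>P. ABp E' A B p \<and> proper A B p"
        "\<forall>p\<in>P. \<forall>q\<in>P. p \<noteq> q \<longrightarrow> set p \<inter> set q = {}"
        using psubset.IH[OF E'E psubset.prems(1) True] by blast
      then show ?thesis using ABp_mono E'E by blast
    next
      case False
      then obtain S where S: "finite S" "sep E' A B S" "card S < k" by (auto simp: not_le)
      have "\<not> sep E A B S" using psubset.prems(2) S by force
      then obtain p where p: "ABp E A B p" "set p \<inter> S = {}" by (auto simp: sep_def)
      have "\<not> wlk E' p"
      proof
        assume "wlk E' p"
        then have "ABp E' A B p" using p by (simp add: ABp_def)
        then show False using S(2) p(2) by (simp add: sep_def)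
      qed
      moreover have "wlk E p" using p(1) by (simp add: ABp_def)
      ultimately obtain u w where uw: "p = u @ x # y # w"
        using wlk_remove_edge[of E p x y] unfolding E'_def by blast
      have xS: "x \<notin> S" and yS: "y \<notin> S" using p(2) uw by auto
      have xy: "x \<noteq> y" using p(1) uw by (auto simp: ABp_def)
      define X1 where "X1 = insert x S"
      define X2 where "X2 = insert y S"
      have sX1: "sep E A B X1" and sX2: "sep E A B X2"
        using sep_insert[of E x y A B S] S(2) unfolding E'_def X1_def X2_def by auto
      have "k \<le> card X1" using psubset.prems(2) sX1 S(1) by (simp add: X1_def)
      then have cX1: "card X1 = k" using S xS unfolding X1_def by simp
      have cX2: "card X2 = k" using S yS cX1 unfolding X1_def X2_def by (simp add: xS)
      have fX1: "finite X1" and fX2: "finite X2" using S(1) by (auto simp: X1_def X2_def)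
      have h1: "\<forall>T. finite T \<longrightarrow> sep E' A X1 T \<longrightarrow> k \<le> card T"
        using sep_prefix[OF sX1, of x y] psubset.prems(2) unfolding E'_def X1_def by auto
      have h2: "\<forall>T. finite T \<longrightarrow> sep E' X2 B T \<longrightarrow> k \<le> card T"
        using sep_suffix[OF sX2, of y x] psubset.prems(2) unfolding E'_def X2_def by auto
      obtain P1 where P1: "card P1 = k" "\<forall>p\<in>P1. ABp E' A X1 p \<and> proper A X1 p"
        "\<forall>p\<in>P1. \<forall>q\<in>P1. p \<noteq> q \<longrightarrow> set p \<inter> set q = {}"
        using psubset.IH[OF E'E psubset.prems(1) h1] by blast
      obtain P2 where P2: "card P2 = k" "\<forall>p\<in>P2. ABp E' X2 B p \<and> proper X2 B p"
        "\<forall>p\<in>P2. \<forall>q\<in>P2. p \<noteq> q \<longrightarrow> set p \<inter> set q = {}"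
        using psubset.IH[OF E'E fX2 h2] by blast
      have crossP: "v \<in> S" if "p1 \<in> P1" "p2 \<in> P2" "v \<in> set p1" "v \<in> set p2" for p1 p2 v
        using cross[OF S(2), of X1 p1 X2 p2 v] P1(2) P2(2) that by (auto simp: X1_def X2_def)
      have injl: "inj_on last P1"
      proof (rule inj_onI)
        fix p q assume pq: "p \<in> P1" "q \<in> P1" "last p = last q"
        show "p = q"
        proof (rule ccontr)
          assume "p \<noteq> q"
          then have "set p \<inter> set q = {}" using P1(3) pq by blast
          moreover have "p \<noteq> []" "q \<noteq> []" using P1(2) pq(1,2) ABp_ne by blast+
          then have "last p \<in> set p" "last q \<in> set q" by simp_all
          ultimately show False using pq(3) by auto
        qed
      qed
      have "last ` P1 \<subseteq> X1" using P1(2) by (auto simp: ABp_def)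
      moreover have "card (last ` P1) = card X1" using card_image[OF injl] P1(1) cX1 by simp
      ultimately have lP1: "last ` P1 = X1" using fX1 by (simp add: card_subset_eq)
      have injh: "inj_on hd P2"
      proof (rule inj_onI)
        fix p q assume pq: "p \<in> P2" "q \<in> P2" "hd p = hd q"
        show "p = q"
        proof (rule ccontr)
          assume "p \<noteq> q"
          then have "set p \<inter> set q = {}" using P2(3) pq by blast
          moreover have "p \<noteq> []" "q \<noteq> []" using P2(2) pq(1,2) ABp_ne by blast+
          then have "hd p \<in> set p" "hd q \<in> set q" by simp_all
          ultimately show False using pq(3) by auto
        qed
      qed
      have "hd ` P2 \<subseteq> X2" using P2(2) by (auto simp: ABp_def)
      moreover have "card (hd ` P2) = card X2" using card_image[OF injh] P2(1) cX2 by simp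
      ultimately have hP2: "hd ` P2 = X2" using fX2 by (simp add: card_subset_eq)
      define g1 where "g1 v = (SOME p. p \<in> P1 \<and> last p = v)" for v
      define g2 where "g2 v = (SOME p. p \<in> P2 \<and> hd p = v)" for v
      have g1: "g1 v \<in> P1 \<and> last (g1 v) = v" if "v \<in> X1" for v
      proof -
        have "\<exists>p. p \<in> P1 \<and> last p = v" using lP1 that by auto
        then show ?thesis unfolding g1_def by (rule someI_ex)
      qed
      have g2: "g2 v \<in> P2 \<and> hd (g2 v) = v" if "v \<in> X2" for v
      proof -
        have "\<exists>p. p \<in> P2 \<and> hd p = v" using hP2 that by auto
        then show ?thesis unfolding g2_def by (rule someI_ex)
      qed
      define h where "h v = (if v = x then y else v)" for v
      have hX: "h v \<in> X2" if "v \<in> X1" for v using that by (auto simp: h_def X1_def X2_def)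
      define c where "c v = (if v = x then g1 x @ g2 y else g1 v @ tl (g2 v))" for v
      have tls: "set (tl l) \<subseteq> set l" for l :: "'a list" by (cases l) auto
      have c_sub: "set (c v) \<subseteq> set (g1 v) \<union> set (g2 (h v))" for v
        unfolding c_def h_def using tls by auto
      have x1: "x \<in> X1" and y2: "y \<in> X2" by (auto simp: X1_def X2_def)
      have cAB: "ABp E A B (c v)" if v: "v \<in> X1" for v
      proof (cases "v = x")
        case True
        have a1: "ABp E A X1 (g1 x)" using g1[OF x1] P1(2) ABp_mono E'E by blast
        have a2: "ABp E X2 B (g2 y)" using g2[OF y2] P2(2) ABp_mono E'E by blast
        have "set (g1 x) \<inter> set (g2 y) = {}"
        proof -
          { fix z assume z: "z \<in> set (g1 x)" "z \<in> set (g2 y)"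
            then have zS: "z \<in> S" using crossP g1[OF x1] g2[OF y2] by blast
            then have "z = last (g1 x)" using z(1) P1(2) g1[OF x1] unfolding proper_def X1_def by blast
            then have False using zS xS g1[OF x1] by simp }
          then show ?thesis by blast
        qed
        moreover have "(last (g1 x), hd (g2 y)) \<in> E" using g1[OF x1] g2[OF y2] e by simp
        ultimately show ?thesis using join2[OF a1 a2] True by (simp add: c_def)
      next
        case False
        then have vS: "v \<in> S" and v2: "v \<in> X2" using v by (auto simp: X1_def X2_def)
        have a1: "ABp E A X1 (g1 v)" using g1[OF v] P1(2) ABp_mono E'E by blast
        have a2: "ABp E X2 B (g2 v)" using g2[OF v2] P2(2) ABp_mono E'E by blast
        have "set (g1 v) \<inter> set (tl (g2 v)) = {}"
        proof -
          { fix z assume z: "z \<in> set (g1 v)" "z \<in> set (tl (g2 v))"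
            then have z2: "z \<in> set (g2 v)" using tls by blast
            then have zS: "z \<in> S" using crossP g1[OF v] g2[OF v2] z(1) by blast
            then have "z = hd (g2 v)" using z2 P2(2) g2[OF v2] unfolding proper_def X2_def by blast
            then have "z = v" using g2[OF v2] by simp
            moreover have "distinct (g2 v)" using a2 by (simp add: ABp_def)
            moreover have "g2 v \<noteq> []" using ABp_ne[OF a2] .
            then have "g2 v = hd (g2 v) # tl (g2 v)" by simp
            ultimately have False using z(2) g2[OF v2] by (metis distinct.simps(2)) }
          then show ?thesis by blast
        qed
        moreover have "last (g1 v) = hd (g2 v)" using g1[OF v] g2[OF v2] by simp
        ultimately show ?thesis using join1[OF a1 a2] False by (simp add: c_def)
      qed
      have key: "a = b" if ab: "a \<in> X1" "b \<in> X1" "z \<in> set (g1 a)" "z \<in> set (g2 (h b))" for a b z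
      proof -
        have zS: "z \<in> S" using crossP g1[OF ab(1)] g2[OF hX[OF ab(2)]] ab by blast
        then have "z = last (g1 a)" using ab(3) P1(2) g1[OF ab(1)] unfolding proper_def X1_def by blast
        then have za: "z = a" using g1[OF ab(1)] by simp
        have "z = hd (g2 (h b))" using zS ab(4) P2(2) g2[OF hX[OF ab(2)]] unfolding proper_def X2_def by blast
        then have zb: "z = h b" using g2[OF hX[OF ab(2)]] by simp
        show ?thesis
        proof (cases "b = x")
          case True then show ?thesis using zb zS yS by (simp add: h_def)
        next
          case False then show ?thesis using za zb by (simp add: h_def)
        qed
      qed
      have disj: "set (c a) \<inter> set (c b) = {}" if ab: "a \<in> X1" "b \<in> X1" "a \<noteq> b" for a b
      proof -
        have "g1 a \<noteq> g1 b" using g1 ab by metis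
        then have d1: "set (g1 a) \<inter> set (g1 b) = {}" using P1(3) g1 ab by blast
        have "h a \<noteq> h b" using ab xS yS unfolding h_def X1_def by auto
        then have "g2 (h a) \<noteq> g2 (h b)" using g2 hX ab by metis
        then have d2: "set (g2 (h a)) \<inter> set (g2 (h b)) = {}" using P2(3) g2 hX ab by blast
        have d3: "set (g1 a) \<inter> set (g2 (h b)) = {}" using key ab by blast
        have d4: "set (g1 b) \<inter> set (g2 (h a)) = {}" using key ab by blast
        show ?thesis using c_sub[of a] c_sub[of b] d1 d2 d3 d4 by blast
      qed
      have injc: "inj_on c X1"
      proof (rule inj_onI)
        fix a b assume ab: "a \<in> X1" "b \<in> X1" "c a = c b"
        show "a = b"
        proof (rule ccontr)
          assume "a \<noteq> b"
          then have "set (c a) \<inter> set (c b) = {}" using disj ab by blast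
          moreover have "c a \<noteq> []" using cAB[OF ab(1)] ABp_ne by blast
          ultimately show False using ab(3) by simp
        qed
      qed
      have "card (c ` X1) = k" using card_image[OF injc] cX1 by simp
      moreover have "\<forall>p\<in>c ` X1. ABp E A B p" using cAB by blast
      moreover have "\<forall>p\<in>c ` X1. \<forall>q\<in>c ` X1. p \<noteq> q \<longrightarrow> set p \<inter> set q = {}"
        using disj by blast
      ultimately show ?thesis using trim_family by blast
    qed
  qed
qed




lemma wlk_set: "wlk E p \<Longrightarrow> v \<in> set p \<Longrightarrow> v = hd p \<or> (\<exists>u. (u,v) \<in> E)"
proof (induction p)
  case Nil then show ?case by simp
next
  case (Cons a p)
  show ?case
  proof (cases "v = a")
    case True then show ?thesis by simp
  next
    case False
    then have vp: "v \<in> set p" using Cons.prems by simp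
    then have ne: "p \<noteq> []" by auto
    then have "wlk E p" "(a, hd p) \<in> E" using Cons.prems by (auto simp: wlk_def successively_Cons)
    then show ?thesis using Cons.IH vp by blast
  qed
qed

lemma pigeon:
  assumes "finite T" "card T < card P" "\<forall>p\<in>P. \<forall>q\<in>P. p \<noteq> q \<longrightarrow> set p \<inter> set q = {y}" "y \<notin> T"
  shows "\<exists>p\<in>P. set p \<inter> T = {}"
proof (rule ccontr)
  assume "\<not> ?thesis"
  then have h: "\<forall>p\<in>P. \<exists>z. z \<in> set p \<inter> T" by blast
  define s where "s p = (SOME z. z \<in> set p \<inter> T)" for p :: "'a list"
  have s: "s p \<in> set p \<inter> T" if "p \<in> P" for p using h that unfolding s_def by (metis someI_ex)
  have "inj_on s P"
  proof (rule inj_onI)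
    fix p q assume pq: "p \<in> P" "q \<in> P" "s p = s q"
    show "p = q"
    proof (rule ccontr)
      assume "p \<noteq> q"
      then have "set p \<inter> set q = {y}" using assms(3) pq by blast
      moreover have "s p \<in> set p" "s p \<in> set q" "s p \<in> T" using s pq by (metis IntD1 IntD2)+
      ultimately show False using assms(4) by (metis IntI singletonD)
    qed
  qed
  moreover have "s ` P \<subseteq> T" using s by blast
  ultimately have "card P \<le> card T" using card_inj_on_le assms(1) by blast
  then show False using assms(2) by simp
qed

lemma dpath_succ: "dpath V E ps \<Longrightarrow> successively (\<lambda>a b. (a,b) \<in> E) ps"
  unfolding dpath_def successively_conv_nth by blast

lemma walk_to_Bp:
  assumes "successively (\<lambda>a b. (a,b) \<in> E) W" "W \<noteq> []" "hd W \<in> A" "c \<notin> A" "last W = c"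
    "set W \<inter> F = {}"
  shows "\<exists>q. ABp {(u,v) \<in> E. u \<notin> F \<and> v \<notin> F \<and> u \<noteq> c \<and> v \<noteq> c} A {v. (v,c) \<in> E} q
          \<and> set q \<subseteq> set W - {c}"
proof -
  have "c \<in> set W" using assms(2,5) last_in_set by blast
  then obtain u w where uw: "W = u @ c # w" "c \<notin> set u" by (meson split_list_first)
  have une: "u \<noteq> []" using uw assms(3,4) by (cases u) auto
  have su: "successively (\<lambda>a b. (a,b) \<in> E) u" and lu: "(last u, c) \<in> E"
    using assms(1) uw une by (auto simp: successively_append_iff)
  have "successively (\<lambda>a b. (a,b) \<in> {(u,v) \<in> E. u \<notin> F \<and> v \<notin> F \<and> u \<noteq> c \<and> v \<noteq> c}) u"
    using su
  proof (rule successively_mono)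
    fix a b assume "a \<in> set u" "b \<in> set u" "(a,b) \<in> E"
    then show "(a,b) \<in> {(u,v) \<in> E. u \<notin> F \<and> v \<notin> F \<and> u \<noteq> c \<and> v \<noteq> c}"
      using uw assms(6) by auto
  qed
  then have wu: "wlk {(u,v) \<in> E. u \<notin> F \<and> v \<notin> F \<and> u \<noteq> c \<and> v \<noteq> c} u" using une by (simp add: wlk_def)
  obtain q where q: "wlk {(u,v) \<in> E. u \<notin> F \<and> v \<notin> F \<and> u \<noteq> c \<and> v \<noteq> c} q" "distinct q" "hd q = hd u" "last q = last u" "set q \<subseteq> set u"
    using wlk_to_path[OF wu] by blast
  have "hd u = hd W" using uw une by simp
  then have "ABp {(u,v) \<in> E. u \<notin> F \<and> v \<notin> F \<and> u \<noteq> c \<and> v \<noteq> c} A {v. (v,c) \<in> E} q"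
    using q assms(3) lu by (simp add: ABp_def)
  moreover have "set q \<subseteq> set W - {c}" using q(5) uw by auto
  ultimately show ?thesis by blast
qed

theorem lemma8:
  fixes V :: "'a set" and E :: "('a \<times> 'a) set" and f :: nat
    and A B C F :: "'a set"
  assumes graph: "simple_digraph V E"
    and cond: "\<And>X Y Z. X \<union> Y \<union> Z = V \<Longrightarrow> X \<inter> Y = {} \<Longrightarrow> X \<inter> Z = {} \<Longrightarrow> Y \<inter> Z = {}
        \<Longrightarrow> X \<noteq> {} \<Longrightarrow> Y \<noteq> {} \<Longrightarrow> card Z \<le> f
        \<Longrightarrow> reaches V E f Z X Y \<or> reaches V E f Z Y X"
    and subs: "A \<subseteq> V" "B \<subseteq> V" "C \<subseteq> V" "F \<subseteq> V"
    and disj: "A \<inter> B = {}" "A \<inter> C = {}" "A \<inter> F = {}" "B \<inter> C = {}" "B \<inter> F = {}" "C \<inter> F = {}"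
    and cardF: "card F \<le> f"
    and ne: "A \<noteq> {}" "B \<noteq> {}" "C \<noteq> {}"
    and AB: "reaches V E f F A B"
    and ABC: "reaches V E f F (A \<union> B) C"
  shows "reaches V E f F A (B \<union> C)"
proof -
  have fV: "finite V" and EV: "E \<subseteq> V \<times> V" using graph by (auto simp: simple_digraph_def)
  have ABall: "\<forall>y\<in>B. \<exists>P. finite P \<and> f + 1 \<le> card P \<and>
        (\<forall>ps\<in>P. Xy_path V E A y ps \<and> set ps \<inter> F = {}) \<and>
        (\<forall>p\<in>P. \<forall>q\<in>P. p \<noteq> q \<longrightarrow> set p \<inter> set q = {y})"
    using AB ne(2) by (simp add: reaches_def)
  have ABCall: "\<forall>y\<in>C. \<exists>P. finite P \<and> f + 1 \<le> card P \<and>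
        (\<forall>ps\<in>P. Xy_path V E (A \<union> B) y ps \<and> set ps \<inter> F = {}) \<and>
        (\<forall>p\<in>P. \<forall>q\<in>P. p \<noteq> q \<longrightarrow> set p \<inter> set q = {y})"
    using ABC ne(3) by (simp add: reaches_def)
  have Call: "\<exists>P. finite P \<and> f + 1 \<le> card P \<and>
        (\<forall>ps\<in>P. Xy_path V E A c ps \<and> set ps \<inter> F = {}) \<and>
        (\<forall>p\<in>P. \<forall>q\<in>P. p \<noteq> q \<longrightarrow> set p \<inter> set q = {c})" if cC: "c \<in> C" for c
  proof -
    define E' where "E' = {(u,v) \<in> E. u \<notin> F \<and> v \<notin> F \<and> u \<noteq> c \<and> v \<noteq> c}"
    define B' where "B' = {v. (v,c) \<in> E}"
    have cA: "c \<notin> A" and cB: "c \<notin> B" and cF: "c \<notin> F" using cC disj by auto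
    have fE: "finite E" using fV EV finite_subset by blast
    have fE': "finite E'" unfolding E'_def by (rule finite_subset[OF _ fE]) auto
    have fA: "finite A" using fV subs(1) finite_subset by blast
    have sepc: "\<forall>S. finite S \<longrightarrow> sep E' A B' S \<longrightarrow> f + 1 \<le> card S"
    proof (intro allI impI)
      fix S assume S: "finite S" "sep E' A B' S"
      show "f + 1 \<le> card S"
      proof (rule ccontr)
        assume "\<not> f + 1 \<le> card S"
        then have cS: "card S \<le> f" by simp
        obtain P where P: "finite P" "f + 1 \<le> card P"
          "\<forall>ps\<in>P. Xy_path V E (A \<union> B) c ps \<and> set ps \<inter> F = {}"
          "\<forall>p\<in>P. \<forall>q\<in>P. p \<noteq> q \<longrightarrow> set p \<inter> set q = {c}"
          using bspec[OF ABCall cC] by blast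
        have "card (S - {c}) < card P" using P(2) cS card_Diff1_le[of S c] S(1) by linarith
        then have "\<exists>p\<in>P. set p \<inter> (S - {c}) = {}"
          using pigeon[of "S - {c}" P c] S(1) P(4) by simp
        then obtain ps where ps: "ps \<in> P" "set ps \<inter> (S - {c}) = {}" by blast
        have psX: "Xy_path V E (A \<union> B) c ps" "set ps \<inter> F = {}" using P(3) ps(1) by auto
        then have dps: "dpath V E ps" and hps: "hd ps \<in> A \<union> B" and lps: "last ps = c"
          by (auto simp: Xy_path_def)
        have sps: "successively (\<lambda>a b. (a,b) \<in> E) ps" using dpath_succ[OF dps] .
        have psne: "ps \<noteq> []" using dps by (simp add: dpath_def)
        have "\<exists>W. successively (\<lambda>a b. (a,b) \<in> E) W \<and> W \<noteq> [] \<and> hd W \<in> A \<and> last W = c \<and>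
                 set W \<inter> F = {} \<and> set W \<inter> S \<subseteq> {c}"
        proof (cases "\<exists>a\<in>set ps. a \<in> A")
          case True
          then obtain u a w where uaw: "ps = u @ a # w" "a \<in> A" by (meson split_list)
          have "successively (\<lambda>a b. (a,b) \<in> E) (a # w)" using sps uaw(1)
            by (simp add: successively_append_iff)
          moreover have "last (a # w) = c" using lps uaw(1) by simp
          moreover have "set (a # w) \<subseteq> set ps" using uaw(1) by auto
          ultimately show ?thesis using uaw(2) psX(2) ps(2) by (intro exI[of _ "a # w"]) auto
        next
          case False
          then have hb: "hd ps \<in> B" using hps psne by auto
          define b where "b = hd ps"
          have hb': "b \<in> B" using hb by (simp add: b_def)
          obtain Pb where Pb: "finite Pb" "f + 1 \<le> card Pb"
            "\<forall>q\<in>Pb. Xy_path V E A b q \<and> set q \<inter> F = {}"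
            "\<forall>p\<in>Pb. \<forall>q\<in>Pb. p \<noteq> q \<longrightarrow> set p \<inter> set q = {b}"
            using bspec[OF ABall hb'] by blast
          have "b \<in> set ps" using psne unfolding b_def by simp
          moreover have "b \<noteq> c" using hb cB unfolding b_def by auto
          ultimately have bS: "b \<notin> S" using ps(2) by blast
          obtain q where q: "q \<in> Pb" "set q \<inter> S = {}"
            using pigeon[of S Pb b] S(1) cS Pb(2) Pb(4) bS by force
          have qX: "Xy_path V E A b q" "set q \<inter> F = {}" using Pb(3) q(1) by auto
          then have dq: "dpath V E q" and hq: "hd q \<in> A" and lq: "last q = b"
            by (auto simp: Xy_path_def)
          have sq: "successively (\<lambda>a b. (a,b) \<in> E) q" using dpath_succ[OF dq] .
          have qne: "q \<noteq> []" using dq by (simp add: dpath_def)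
          have pseq: "ps = b # tl ps" using psne unfolding b_def by simp
          have tne: "tl ps \<noteq> []"
          proof
            assume "tl ps = []"
            then have "last ps = b" using pseq by (metis last_ConsL)
            then show False using lps \<open>b \<noteq> c\<close> by simp
          qed
          have "successively (\<lambda>a b. (a,b) \<in> E) (b # tl ps)" using sps pseq by simp
          then have s2: "successively (\<lambda>a b. (a,b) \<in> E) (tl ps)" "(b, hd (tl ps)) \<in> E"
            using tne by (auto simp: successively_Cons)
          have "successively (\<lambda>a b. (a,b) \<in> E) (q @ tl ps)"
            using sq s2 lq tne qne by (simp add: successively_append_iff)
          moreover have "last (q @ tl ps) = c" using tne lps pseq by (metis last_ConsR last_appendR)
          moreover have "hd (q @ tl ps) \<in> A" using hq qne by simp
          moreover have "set (tl ps) \<subseteq> set ps" using pseq by (metis set_subset_Cons)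
          ultimately show ?thesis using qX(2) q(2) psX(2) ps(2) qne
            by (intro exI[of _ "q @ tl ps"]) auto
        qed
        then obtain W where W: "successively (\<lambda>a b. (a,b) \<in> E) W" "W \<noteq> []" "hd W \<in> A"
          "last W = c" "set W \<inter> F = {}" "set W \<inter> S \<subseteq> {c}" by blast
        obtain q where q: "ABp E' A B' q" "set q \<subseteq> set W - {c}"
          using walk_to_Bp[OF W(1,2,3) cA W(4,5)] unfolding E'_def B'_def by blast
        have "set q \<inter> S = {}" using q(2) W(6) by blast
        then show False using S(2) q(1) by (simp add: sep_def)
      qed
    qed
    obtain P where P: "card P = f + 1" "\<forall>p\<in>P. ABp E' A B' p \<and> proper A B' p"
      "\<forall>p\<in>P. \<forall>q\<in>P. p \<noteq> q \<longrightarrow> set p \<inter> set q = {}"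
      using menger[OF fE' fA sepc] by blast
    define R where "R = (\<lambda>p. p @ [c]) ` P"
    have injR: "inj_on (\<lambda>p. p @ [c]) P" by (simp add: inj_on_def)
    have fP: "finite P" using P(1) card.infinite by fastforce
    have vert: "v \<in> V \<and> v \<notin> F \<and> v \<noteq> c" if "p \<in> P" "v \<in> set p" for p v
    proof -
      have a: "ABp E' A B' p" using P(2) that(1) by blast
      then have "wlk E' p" by (simp add: ABp_def)
      then have "v = hd p \<or> (\<exists>u. (u,v) \<in> E')" using wlk_set[OF _ that(2)] by blast
      then show ?thesis
      proof
        assume "v = hd p"
        then have "v \<in> A" using a by (simp add: ABp_def)
        then show ?thesis using subs(1) disj(3) cA by blast
      next
        assume "\<exists>u. (u,v) \<in> E'"
        then show ?thesis using EV unfolding E'_def by blast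
      qed
    qed
    have Rpath: "Xy_path V E A c (p @ [c]) \<and> set (p @ [c]) \<inter> F = {}" if pP: "p \<in> P" for p
    proof -
      have a: "ABp E' A B' p" using P(2) pP by blast
      have pne: "p \<noteq> []" using ABp_ne[OF a] .
      have "successively (\<lambda>a b. (a,b) \<in> E') p" using a by (simp add: ABp_def wlk_def)
      then have "successively (\<lambda>a b. (a,b) \<in> E) p" by (rule successively_mono) (auto simp: E'_def)
      moreover have "(last p, c) \<in> E" using a by (simp add: ABp_def B'_def)
      ultimately have s: "successively (\<lambda>a b. (a,b) \<in> E) (p @ [c])" using pne
        by (simp add: successively_append_iff)
      have cp: "c \<notin> set p" using vert pP by blast
      have d: "distinct (p @ [c])" using a cp by (simp add: ABp_def)
      have sV: "set (p @ [c]) \<subseteq> V" using vert pP cC subs(3) by auto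
      have "dpath V E (p @ [c])" unfolding dpath_def using s d sV
        by (simp add: successively_conv_nth)
      moreover have "hd (p @ [c]) \<in> A" using a pne by (simp add: ABp_def)
      moreover have "set (p @ [c]) \<inter> F = {}" using vert pP cF by auto
      ultimately show ?thesis using cA by (simp add: Xy_path_def)
    qed
    have "finite R" using fP by (simp add: R_def)
    moreover have "f + 1 \<le> card R" using card_image[OF injR] P(1) by (simp add: R_def)
    moreover have "\<forall>ps\<in>R. Xy_path V E A c ps \<and> set ps \<inter> F = {}" using Rpath by (auto simp: R_def)
    moreover have "\<forall>p\<in>R. \<forall>q\<in>R. p \<noteq> q \<longrightarrow> set p \<inter> set q = {c}"
    proof (intro ballI impI)
      fix p' q' assume "p' \<in> R" "q' \<in> R" "p' \<noteq> q'"
      then obtain p q where pq: "p \<in> P" "q \<in> P" "p' = p @ [c]" "q' = q @ [c]" "p \<noteq> q"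
        by (auto simp: R_def)
      then have "set p \<inter> set q = {}" using P(3) by blast
      moreover have "c \<notin> set p" "c \<notin> set q" using vert pq(1,2) by blast+
      ultimately show "set p' \<inter> set q' = {c}" using pq(3,4) by auto
    qed
    ultimately show ?thesis by blast
  qed
  have "\<forall>y\<in>B \<union> C. \<exists>P. finite P \<and> f + 1 \<le> card P \<and>
        (\<forall>ps\<in>P. Xy_path V E A y ps \<and> set ps \<inter> F = {}) \<and>
        (\<forall>p\<in>P. \<forall>q\<in>P. p \<noteq> q \<longrightarrow> set p \<inter> set q = {y})"
    using ABall Call by blast
  then show ?thesis by (simp add: reaches_def)
qed


end
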